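(* Let $p$ be a prime, let $G$ be a finite Abelian $p$-group, and let $S$ be a sequence over $G$ with $|S|=\mathsf{D}(G)+i-1$, where $i\ge 1$ is an integer. Then: (i) If $i\ge 2$ and $S$ contains a zero-sum subsequence $S'$ with $p\nmid |S'|$, then $S$ is dispersive. (ii) If $S$ contains no non-empty zero-sum subsequence $S'$ with $p\mid |S'|$, then $i\le p-1$, and $S$ contains at least $i$ non-empty zero-sum subsequences with pairwise distinct lengths.
   Context: A sequence over a finite Abelian group $G$ (written additively) is a finite multiset of elements of $G$; its length $|S|$ is the number of terms counted with multiplicity, and a subsequence is a sub-multiset. A zero-sum sequence is one whose terms sum to $0$. The Davenport constant $\mathsf{D}(G)$ is the smallest positive integer $t$ such that every sequence over $G$ of length at least $t$ contains a non-empty zero-sum subsequence. A sequence $S$ over $G$ is dispersive if it contains two non-empty zero-sum subsequences $S_1,S_2$ with $|S_1|\neq|S_2|$. *)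

theory Defs
  imports Main "HOL-Library.Multiset" "HOL-Computational_Algebra.Primes"
begin

text \<open>A finite Abelian group is modelled as a type of class finite and ab_group_add;
  sequences over it are multisets, subsequences are sub-multisets.\<close>

definition zero_sum :: "'a::ab_group_add multiset \<Rightarrow> bool" where
  "zero_sum T \<longleftrightarrow> sum_mset T = 0"

definition davenport :: "'a::{finite,ab_group_add} itself \<Rightarrow> nat" where
  "davenport _ = (LEAST t::nat. 0 < t \<and>
     (\<forall>S::'a multiset. t \<le> size S \<longrightarrow>
        (\<exists>T. T \<subseteq># S \<and> T \<noteq> {#} \<and> zero_sum T)))"

definition dispersive :: "'a::ab_group_add multiset \<Rightarrow> bool" where
  "dispersive S \<longleftrightarrow> (\<exists>S1 S2. S1 \<subseteq># S \<and> S2 \<subseteq># S \<and> S1 \<noteq> {#} \<and> S2 \<noteq> {#}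
      \<and> zero_sum S1 \<and> zero_sum S2 \<and> size S1 \<noteq> size S2)"

end

theory Submission
  imports Defs "HOL-Library.Poly_Mapping"
begin

primrec nsm :: "nat \<Rightarrow> 'a::ab_group_add \<Rightarrow> 'a" where
  "nsm 0 x = 0" | "nsm (Suc n) x = x + nsm n x"

lemma nsm_add: "nsm (m + n) x = nsm m x + nsm n x"
  by (induct m) (simp_all add: add.assoc)
lemma nsm_mult: "nsm (m * n) x = nsm m (nsm n x)"
  by (induct m) (simp_all add: nsm_add)
lemma nsm_distrib: "nsm n (x + y) = nsm n x + nsm n y"
  by (induct n) (simp_all add: algebra_simps)
lemma nsm_zero[simp]: "nsm n 0 = 0" by (induct n) simp_all
lemma nsm_one[simp]: "nsm 1 x = x" by simp
lemma nsm_minus: "nsm n (- x) = - nsm n x" by (induct n) (simp_all add: algebra_simps)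
lemma nsm_diff: "nsm n (x - y) = nsm n x - nsm n y"
  using nsm_distrib[of n x "-y"] by (simp add: nsm_minus)
lemma nsm_sum: "nsm n (sum f A) = (\<Sum>a\<in>A. nsm n (f a))"
  by (induct A rule: infinite_finite_induct) (simp_all add: nsm_distrib)

lemma sum_translate: "finite A \<Longrightarrow> (\<Sum>g\<in>A. x + f g) = nsm (card A) x + sum f A"
  by (induct A rule: finite_induct) (simp_all add: algebra_simps)

lemma nsm_card_univ: "nsm (card (UNIV::'a::{finite,ab_group_add} set)) (x::'a) = 0"
proof -
  have "(\<Sum>g\<in>(UNIV::'a set). g) = (\<Sum>g\<in>UNIV. x + g)"
    by (rule sum.reindex_bij_witness[where i="\<lambda>b. x + b" and j="\<lambda>a. a - x"]) auto
  also have "\<dots> = nsm (card (UNIV::'a set)) x + (\<Sum>g\<in>UNIV. g)" by (simp add: sum_translate)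
  finally show ?thesis by simp
qed

lemma nsm_zero_dvd: "nsm g (a::'a::ab_group_add) = 0 \<Longrightarrow> g dvd m \<Longrightarrow> nsm m a = 0"
  by (auto simp: mult.commute[of g] nsm_mult elim!: dvdE)

definition sg :: "'a::ab_group_add set \<Rightarrow> bool" where
  "sg H \<longleftrightarrow> 0 \<in> H \<and> (\<forall>x\<in>H. \<forall>y\<in>H. x + y \<in> H)"

lemma sg_0: "sg H \<Longrightarrow> 0 \<in> H" by (simp add: sg_def)
lemma sg_add: "sg H \<Longrightarrow> x \<in> H \<Longrightarrow> y \<in> H \<Longrightarrow> x + y \<in> H" by (simp add: sg_def)
lemma sg_nsm: "sg H \<Longrightarrow> x \<in> H \<Longrightarrow> nsm n x \<in> H"
  by (induct n) (simp_all add: sg_0 sg_add)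
lemma sg_sum: "sg H \<Longrightarrow> (\<And>j. j \<in> J \<Longrightarrow> f j \<in> H) \<Longrightarrow> sum f J \<in> H"
  by (induct J rule: infinite_finite_induct) (simp_all add: sg_0 sg_add)
lemma sg_neg: assumes "sg H" "(x::'a::{finite,ab_group_add}) \<in> H" shows "- x \<in> H"
proof -
  let ?N = "card (UNIV::'a set)"
  have "?N > 0" by (simp add: finite_UNIV_card_ge_0)
  then have "?N = Suc (?N - 1)" by simp
  then have "0 = x + nsm (?N - 1) x" using nsm_card_univ[of x] by (metis nsm.simps(2))
  then have "- x = nsm (?N - 1) x" by (metis add.inverse_unique)
  then show ?thesis using sg_nsm[OF assms] by simp
qed
lemma sg_diff: "sg H \<Longrightarrow> (x::'a::{finite,ab_group_add}) \<in> H \<Longrightarrow> y \<in> H \<Longrightarrow> x - y \<in> H"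
  using sg_add[of H x "-y"] sg_neg[of H y] by simp

locale pgrp =
  fixes p k :: nat and ty :: "'a::{finite,ab_group_add} itself"
  assumes prime: "prime p" and expo: "\<And>x::'a. nsm (p ^ k) x = 0"
begin

lemma ord_key:
  assumes "nsm (p^n) (a::'a) = 0" "nsm (p^(n-1)) a \<noteq> 0"
  shows "nsm m a = 0 \<longleftrightarrow> p^n dvd m"
proof
  assume m: "nsm m a = 0"
  show "p^n dvd m"
  proof (cases "m = 0")
    case True then show ?thesis by simp
  next
    case False
    then obtain x y where xy: "m * x = p^n * y + gcd m (p^n)" using bezout_nat by blast
    have "nsm (m * x) a = 0" using nsm_zero_dvd[OF m, of "m * x"] by simp
    moreover have "nsm (p^n * y) a = 0" using nsm_zero_dvd[OF assms(1), of "p^n * y"] by simp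
    ultimately have g: "nsm (gcd m (p^n)) a = 0" using xy by (simp add: nsm_add)
    have "gcd m (p^n) dvd p^n" by simp
    then obtain b where b: "b \<le> n" "gcd m (p^n) = p^b"
      using divides_primepow_nat[OF prime] by blast
    show ?thesis
    proof (cases "b = n")
      case True then have "gcd m (p^n) = p^n" using b by simp
      then show ?thesis by (metis gcd_dvd1)
    next
      case False
      then have "p^b dvd p^(n-1)" using b by (simp add: le_imp_power_dvd)
      then have "nsm (p^(n-1)) a = 0" using g b(2) nsm_zero_dvd[of "p^b" a "p^(n-1)"] by simp
      then show ?thesis using assms(2) by simp
    qed
  qed
next
  assume "p^n dvd m" then show "nsm m a = 0" using assms(1) nsm_zero_dvd[of "p^n" a m] by simp
qed

lemma complement:
  assumes H: "sg (H::'a set)" and aH: "a \<in> H" and n1: "n \<ge> 1"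
    and hexp: "\<forall>x\<in>H. nsm (p^n) x = 0" and aord: "\<forall>m. nsm m a = 0 \<longleftrightarrow> p^n dvd m"
  shows "\<exists>K. sg K \<and> K \<subseteq> H \<and> range (\<lambda>m. nsm m a) \<inter> K = {0} \<and>
           (\<forall>g\<in>H. \<exists>m \<kappa>. \<kappa> \<in> K \<and> g = nsm m a + \<kappa>)"
proof -
  define A where "A = range (\<lambda>m. nsm m a)"
  define C where "C = {K. sg K \<and> K \<subseteq> H \<and> A \<inter> K = {0}}"
  have p1: "p > 1" using prime prime_gt_1_nat by blast
  have "{0} \<in> C" unfolding C_def A_def sg_def using sg_0[OF H] by (auto intro: range_eqI[where x=0])
  have finC: "finite C" by (rule finite_subset[of C "Pow UNIV"]) auto
  define mx where "mx = Max (card ` C)"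
  obtain K where KC: "K \<in> C" and Kmax: "card K = mx"
    using Max_in[of "card ` C"] finC \<open>{0} \<in> C\<close> unfolding mx_def by fastforce
  have maxK: "\<And>K'. K' \<in> C \<Longrightarrow> card K' \<le> card K" using Kmax finC unfolding mx_def by simp
  have K: "sg K" "K \<subseteq> H" "A \<inter> K = {0}" using KC unfolding C_def by auto
  define M where "M = {nsm m a + \<kappa> | m \<kappa>. \<kappa> \<in> K}"
  have M: "sg M" unfolding sg_def M_def
  proof (intro conjI ballI)
    show "0 \<in> {nsm m a + \<kappa> |m \<kappa>. \<kappa> \<in> K}" using sg_0[OF K(1)] by (auto intro!: exI[of _ 0])
  next
    fix x y assume "x \<in> {nsm m a + \<kappa> |m \<kappa>. \<kappa> \<in> K}" "y \<in> {nsm m a + \<kappa> |m \<kappa>. \<kappa> \<in> K}"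
    then obtain m1 k1 m2 k2 where "x = nsm m1 a + k1" "y = nsm m2 a + k2" "k1 \<in> K" "k2 \<in> K" by auto
    then show "x + y \<in> {nsm m a + \<kappa> |m \<kappa>. \<kappa> \<in> K}"
      by (auto intro!: exI[of _ "m1+m2"] exI[of _ "k1+k2"] simp: nsm_add sg_add[OF K(1)] algebra_simps)
  qed
  have KM: "K \<subseteq> M" unfolding M_def by (force intro: exI[of _ 0])
  have AM: "A \<subseteq> M" unfolding M_def A_def using sg_0[OF K(1)] by force
  have MH: "M \<subseteq> H" unfolding M_def using K(2) by (auto intro!: sg_add[OF H] sg_nsm[OF H aH])
  have claim: "x \<in> M" if xH: "x \<in> H" and px: "nsm p x \<in> M" for x
  proof (rule ccontr)
    assume xM: "x \<notin> M"
    obtain k \<kappa> where kk: "nsm p x = nsm k a + \<kappa>" "\<kappa> \<in> K" using px unfolding M_def by auto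
    have pn: "p^n = p^(n-1) * p" using n1 by (metis Suc_diff_le diff_Suc_1 power_Suc2)
    have "0 = nsm (p^n) x" using hexp xH by simp
    also have "\<dots> = nsm (p^(n-1)) (nsm p x)" by (simp add: pn nsm_mult)
    also have "\<dots> = nsm (p^(n-1) * k) a + nsm (p^(n-1)) \<kappa>" by (simp add: kk nsm_distrib nsm_mult)
    finally have "nsm (p^(n-1) * k) a = - nsm (p^(n-1)) \<kappa>" by (simp add: eq_neg_iff_add_eq_0)
    moreover have "- nsm (p^(n-1)) \<kappa> \<in> K" using sg_neg[OF K(1)] sg_nsm[OF K(1) kk(2)] by blast
    ultimately have "nsm (p^(n-1) * k) a \<in> A \<inter> K" unfolding A_def by (metis IntI rangeI)
    then have "nsm (p^(n-1) * k) a = 0" using K(3) by blast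
    then have "p^(n-1) * p dvd p^(n-1) * k" using aord pn by simp
    then have "p dvd k" using p1 by (simp add: dvd_mult_cancel1)
    then obtain k' where k': "k = p * k'" by blast
    define z where "z = x - nsm k' a"
    have zH: "z \<in> H" unfolding z_def by (rule sg_diff[OF H xH sg_nsm[OF H aH]])
    have pz: "nsm p z = \<kappa>" unfolding z_def by (simp add: nsm_diff kk k' nsm_mult[symmetric])
    have zM: "z \<notin> M"
    proof
      assume "z \<in> M"
      then obtain m1 k1 where "z = nsm m1 a + k1" "k1 \<in> K" unfolding M_def by auto
      then have "x = nsm (m1 + k') a + k1" unfolding z_def by (simp add: nsm_add algebra_simps)
      then show False using xM \<open>k1 \<in> K\<close> unfolding M_def by auto
    qed
    define K' where "K' = {\<kappa> + nsm t z | \<kappa> t. \<kappa> \<in> K}"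
    have sgK': "sg K'" unfolding sg_def K'_def
    proof (intro conjI ballI)
      show "0 \<in> {\<kappa> + nsm t z |\<kappa> t. \<kappa> \<in> K}" using sg_0[OF K(1)] by (auto intro!: exI[of _ 0])
    next
      fix x y assume "x \<in> {\<kappa> + nsm t z |\<kappa> t. \<kappa> \<in> K}" "y \<in> {\<kappa> + nsm t z |\<kappa> t. \<kappa> \<in> K}"
      then obtain m1 k1 m2 k2 where "x = k1 + nsm m1 z" "y = k2 + nsm m2 z" "k1 \<in> K" "k2 \<in> K" by auto
      then show "x + y \<in> {\<kappa> + nsm t z |\<kappa> t. \<kappa> \<in> K}"
        by (auto intro!: exI[of _ "m1+m2"] exI[of _ "k1+k2"] simp: nsm_add sg_add[OF K(1)] algebra_simps)
    qed
    have K'H: "K' \<subseteq> H" unfolding K'_def using K(2) by (auto intro!: sg_add[OF H] sg_nsm[OF H zH])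
    have KK': "K \<subseteq> K'" unfolding K'_def by (force intro: exI[of _ 0])
    have zK': "z \<in> K'" unfolding K'_def using sg_0[OF K(1)] by (force intro: exI[of _ 1])
    have AK': "A \<inter> K' = {0}"
    proof
      show "{0} \<subseteq> A \<inter> K'" using K(3) KK' by blast
    next
      show "A \<inter> K' \<subseteq> {0}"
      proof
        fix w assume w: "w \<in> A \<inter> K'"
        then obtain m where wm: "w = nsm m a" unfolding A_def by auto
        obtain k1 t where kt: "w = k1 + nsm t z" "k1 \<in> K" using w unfolding K'_def by auto
        define q r where "q = t div p" "r = t mod p"
        have t: "t = q * p + r" unfolding q_r_def by simp
        have k2K: "nsm q (nsm p z) \<in> K" using pz kk(2) sg_nsm[OF K(1)] by simp
        have w2: "w = (k1 + nsm q (nsm p z)) + nsm r z"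
          using kt t by (simp add: nsm_add nsm_mult add.assoc)
        show "w \<in> {0}"
        proof (cases "r = 0")
          case True
          then have "w \<in> K" using w2 sg_add[OF K(1) kt(2) k2K] by simp
          then show ?thesis using w K(3) by blast
        next
          case False
          have rM: "nsm r z \<in> M"
          proof -
            have "nsm r z = w - (k1 + nsm q (nsm p z))" using w2 by simp
            moreover have "w \<in> M" using w AM by blast
            moreover have "k1 + nsm q (nsm p z) \<in> M" using KM sg_add[OF K(1) kt(2) k2K] by blast
            ultimately show ?thesis using sg_diff[OF M] by simp
          qed
          have "r < p" unfolding q_r_def using p1 by simp
          then have "coprime r p" using False prime
            by (metis coprime_commute le_less_trans nat_dvd_not_less neq0_conv prime_imp_coprime_nat)
          then have g1: "gcd r p = 1" by simp
          obtain u v where uv: "r * u = p * v + gcd r p" using bezout_nat False by blast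
          have "nsm (r * u) z \<in> M" using sg_nsm[OF M rM, of u] by (simp add: mult.commute[of r] nsm_mult)
          moreover have "nsm (r * u) z = nsm v (nsm p z) + z"
            using uv g1 by (simp add: nsm_add mult.commute[of p] nsm_mult)
          moreover have "nsm v (nsm p z) \<in> M" using KM k2K pz kk(2) sg_nsm[OF K(1)] by auto
          ultimately have "z \<in> M" using sg_diff[OF M] by (metis add_diff_cancel_left')
          then show ?thesis using zM by simp
        qed
      qed
    qed
    have "K' \<in> C" unfolding C_def using sgK' K'H AK' by simp
    then have "card K' \<le> card K" by (rule maxK)
    moreover have "K \<subset> K'" using KK' zK' zM KM by blast
    then have "card K < card K'" by (simp add: psubset_card_mono)
    ultimately show False by simp
  qed
  have ind: "\<forall>y\<in>H. nsm (p^j) y \<in> M \<longrightarrow> y \<in> M" for j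
  proof (induct j)
    case 0 then show ?case by simp
  next
    case (Suc j)
    show ?case
    proof (intro ballI impI)
      fix y assume yH: "y \<in> H" and "nsm (p ^ Suc j) y \<in> M"
      then have "nsm p (nsm (p^j) y) \<in> M" by (simp add: nsm_mult[symmetric])
      then have "nsm (p^j) y \<in> M" using claim sg_nsm[OF H yH] by blast
      then show "y \<in> M" using Suc yH by blast
    qed
  qed
  have "\<forall>g\<in>H. \<exists>m \<kappa>. \<kappa> \<in> K \<and> g = nsm m a + \<kappa>"
  proof
    fix g assume gH: "g \<in> H"
    have "nsm (p^n) g \<in> M" using hexp gH sg_0[OF M] by simp
    then have "g \<in> M" using ind gH by blast
    then show "\<exists>m \<kappa>. \<kappa> \<in> K \<and> g = nsm m a + \<kappa>" unfolding M_def by auto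
  qed
  then show ?thesis using K unfolding A_def by blast
qed

end

definition basis :: "nat \<Rightarrow> 'a::ab_group_add set \<Rightarrow> nat \<Rightarrow> (nat \<Rightarrow> 'a) \<Rightarrow> (nat \<Rightarrow> nat) \<Rightarrow> bool" where
 "basis p H r e \<alpha> \<longleftrightarrow> (\<forall>j<r. e j \<in> H \<and> nsm (p^(\<alpha> j)) (e j) = 0) \<and>
    (\<forall>g\<in>H. \<exists>c. g = (\<Sum>j<r. nsm (c j) (e j))) \<and>
    (\<forall>c. (\<forall>j<r. c j < p^(\<alpha> j)) \<and> (\<Sum>j<r. nsm (c j) (e j)) = 0 \<longrightarrow> (\<forall>j<r. c j = 0))"

lemma sum_upd_lt: "(\<Sum>j<(r::nat). f j ((e(r := a)) j)) = (\<Sum>j<r. f j (e j))"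
  by (rule sum.cong) auto

context pgrp begin

lemma basis_exists: "sg (H::'a set) \<Longrightarrow> \<exists>r e \<alpha>. basis p H r e \<alpha>"
proof (induct "card H" arbitrary: H rule: less_induct)
  case less
  show ?case
  proof (cases "H = {0}")
    case True
    have "basis p H 0 (\<lambda>_. 0) (\<lambda>_. 0)" unfolding basis_def using True by simp
    then show ?thesis by blast
  next
    case False
    have ex: "\<exists>n. \<forall>x\<in>H. nsm (p^n) x = 0" using expo by blast
    define n where "n = (LEAST n. \<forall>x\<in>H. nsm (p^n) x = 0)"
    have hexp: "\<forall>x\<in>H. nsm (p^n) x = 0" unfolding n_def by (rule LeastI_ex[OF ex])
    have n1: "n \<ge> 1"
    proof (rule ccontr)
      assume "\<not> n \<ge> 1" then have "n = 0" by simp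
      then have "\<forall>x\<in>H. x = 0" using hexp by simp
      then show False using False sg_0[OF less.prems] by blast
    qed
    have "\<not> (\<forall>x\<in>H. nsm (p^(n-1)) x = 0)"
    proof
      assume "\<forall>x\<in>H. nsm (p^(n-1)) x = 0"
      then have "n \<le> n - 1" unfolding n_def by (rule Least_le)
      then show False using n1 by simp
    qed
    then obtain a where aH: "a \<in> H" and an: "nsm (p^(n-1)) a \<noteq> 0" by blast
    have aord: "\<forall>m. nsm m a = 0 \<longleftrightarrow> p^n dvd m" using ord_key[of n a] hexp aH an by blast
    obtain K where K: "sg K" "K \<subseteq> H" "range (\<lambda>m. nsm m a) \<inter> K = {0}"
      and gen: "\<forall>g\<in>H. \<exists>m \<kappa>. \<kappa> \<in> K \<and> g = nsm m a + \<kappa>"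
      using complement[OF less.prems aH n1 hexp aord] by blast
    have aK: "a \<notin> K"
    proof
      assume "a \<in> K"
      moreover have "a \<in> range (\<lambda>m. nsm m a)" by (metis nsm_one rangeI)
      ultimately have "a = 0" using K(3) by blast
      then show False using an by simp
    qed
    have "card K < card H" using K(2) aH aK by (metis finite psubsetI psubset_card_mono)
    then obtain r e \<alpha> where B: "basis p K r e \<alpha>" using less.hyps K(1) by blast
    define e' where "e' = e(r := a)"
    define \<alpha>' where "\<alpha>' = \<alpha>(r := n)"
    have B1: "\<forall>j<r. e j \<in> K \<and> nsm (p^(\<alpha> j)) (e j) = 0" using B unfolding basis_def by blast
    have B2: "\<forall>g\<in>K. \<exists>c. g = (\<Sum>j<r. nsm (c j) (e j))" using B unfolding basis_def by blast
    have B3: "\<forall>c. (\<forall>j<r. c j < p^(\<alpha> j)) \<and> (\<Sum>j<r. nsm (c j) (e j)) = 0 \<longrightarrow> (\<forall>j<r. c j = 0)"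
      using B unfolding basis_def by blast
    have sumeq: "(\<Sum>j<Suc r. nsm (c j) (e' j)) = (\<Sum>j<r. nsm (c j) (e j)) + nsm (c r) a" for c
      using sum_upd_lt[of "\<lambda>j x. nsm (c j) x" e r a] by (simp add: e'_def)
    have h1: "\<forall>j<Suc r. e' j \<in> H \<and> nsm (p ^ \<alpha>' j) (e' j) = 0"
    proof (intro allI impI)
      fix j assume "j < Suc r"
      then show "e' j \<in> H \<and> nsm (p ^ \<alpha>' j) (e' j) = 0"
        using B1 K(2) aH hexp by (cases "j = r") (auto simp: e'_def \<alpha>'_def)
    qed
    have h2: "\<forall>g\<in>H. \<exists>c. g = (\<Sum>j<Suc r. nsm (c j) (e' j))"
    proof
      fix g assume "g \<in> H"
      then obtain m \<kappa> where m: "\<kappa> \<in> K" "g = nsm m a + \<kappa>" using gen by blast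
      then obtain c where c: "\<kappa> = (\<Sum>j<r. nsm (c j) (e j))" using B2 by blast
      have "g = (\<Sum>j<Suc r. nsm ((c(r := m)) j) (e' j))"
        using sumeq[of "c(r := m)"] sum_upd_lt[of "\<lambda>j x. nsm x (e j)" c r m] m c
        by (simp add: add.commute)
      then show "\<exists>c. g = (\<Sum>j<Suc r. nsm (c j) (e' j))" by blast
    qed
    have h3: "\<forall>c. (\<forall>j<Suc r. c j < p ^ \<alpha>' j) \<and> (\<Sum>j<Suc r. nsm (c j) (e' j)) = 0 \<longrightarrow> (\<forall>j<Suc r. c j = 0)"
    proof (intro allI impI)
      fix c j assume h: "(\<forall>j<Suc r. c j < p ^ \<alpha>' j) \<and> (\<Sum>j<Suc r. nsm (c j) (e' j)) = 0"
        and j: "j < Suc r"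
      have s: "(\<Sum>j<r. nsm (c j) (e j)) + nsm (c r) a = 0" using h sumeq by simp
      have sK: "(\<Sum>j<r. nsm (c j) (e j)) \<in> K" using B1 by (intro sg_sum[OF K(1)] sg_nsm[OF K(1)]) auto
      have "nsm (c r) a = - (\<Sum>j<r. nsm (c j) (e j))" using s by (metis add.inverse_unique add.commute)
      then have "nsm (c r) a \<in> K" using sg_neg[OF K(1) sK] by simp
      moreover have "nsm (c r) a \<in> range (\<lambda>m. nsm m a)" by simp
      ultimately have "nsm (c r) a = 0" using K(3) by blast
      then have "p^n dvd c r" using aord by blast
      moreover have "c r < p ^ \<alpha>' r" using h by blast
      then have "c r < p^n" by (simp add: \<alpha>'_def)
      ultimately have cr: "c r = 0" using nat_dvd_not_less by (metis gr0I)
      then have "(\<Sum>j<r. nsm (c j) (e j)) = 0" using s by simp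
      moreover have "\<forall>j<r. c j < p^(\<alpha> j)"
      proof (intro allI impI)
        fix j assume "j < r"
        then have "c j < p ^ \<alpha>' j" using h by simp
        then show "c j < p^(\<alpha> j)" using \<open>j < r\<close> by (simp add: \<alpha>'_def)
      qed
      ultimately have "\<forall>j<r. c j = 0" using B3 by blast
      then show "c j = 0" using cr j by (cases "j = r") auto
    qed
    have "basis p H (Suc r) e' \<alpha>'" unfolding basis_def using h1 h2 h3 by blast
    then show ?thesis by blast
  qed
qed

end


definition inN :: "'r::comm_ring_1 \<Rightarrow> 'r \<Rightarrow> bool" where
  "inN c f \<longleftrightarrow> (\<exists>h. f = c * h)"

lemma inN_0[simp]: "inN c 0" unfolding inN_def by (auto intro: exI[of _ 0])
lemma inN_add: "inN c f \<Longrightarrow> inN c g \<Longrightarrow> inN c (f + g)"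
  unfolding inN_def by (auto simp: distrib_left[symmetric])
lemma inN_mult: "inN c f \<Longrightarrow> inN c (f * g)"
  unfolding inN_def by (auto simp: mult.assoc)
lemma inN_mult2: "inN c f \<Longrightarrow> inN c (g * f)"
  using inN_mult[of c f g] by (simp add: mult.commute)
lemma inN_neg: "inN c f \<Longrightarrow> inN c (- f)"
  unfolding inN_def by (auto intro: exI[of _ "- h" for h])
lemma inN_diff: "inN c f \<Longrightarrow> inN c g \<Longrightarrow> inN c (f - g)"
  using inN_add[of c f "-g"] inN_neg[of c g] by simp
lemma inN_c: "inN c (c * h)" unfolding inN_def by blast
lemma inN_sum: "(\<And>i. i \<in> A \<Longrightarrow> inN c (f i)) \<Longrightarrow> inN c (sum f A)"
  by (induct A rule: infinite_finite_induct) (simp_all add: inN_add)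

lemma ab_aux1: "(x::'r::ab_group_add) = b + s + a \<Longrightarrow> x = a + b + s"
  by (simp add: algebra_simps)
lemma ab_aux2: "(x::'r::ab_group_add) = a + b + s \<Longrightarrow> x - (a - c) = s + (b + c)"
  by (simp add: algebra_simps)

lemma binom_mid:
  fixes a b :: "'r::comm_ring_1"
  assumes "p > 0"
  shows "(a + b) ^ p = a ^ p + b ^ p + (\<Sum>k\<in>{1..<p}. of_nat (p choose k) * a ^ k * b ^ (p - k))"
proof -
  have "(a + b) ^ p = (\<Sum>k\<le>p. of_nat (p choose k) * a ^ k * b ^ (p - k))"
    by (rule binomial_ring)
  also have "\<dots> = (\<Sum>k<p. of_nat (p choose k) * a ^ k * b ^ (p - k)) + a ^ p"
    using assms by (simp add: lessThan_Suc_atMost[symmetric])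
  also have "(\<Sum>k<p. of_nat (p choose k) * a ^ k * b ^ (p - k)) =
      b ^ p + (\<Sum>k\<in>{1..<p}. of_nat (p choose k) * a ^ k * b ^ (p - k))"
    using assms by (simp add: lessThan_atLeast0 sum.atLeast_Suc_lessThan)
  finally show ?thesis by (rule ab_aux1)
qed

lemma frob:
  fixes u v :: "'r::comm_ring_1"
  assumes "prime p"
  shows "inN (of_nat p) ((u - v) ^ p - (u ^ p - v ^ p))"
proof -
  have p0: "p > 0" using assms prime_gt_0_nat by blast
  define S where "S = (\<Sum>k\<in>{1..<p}. of_nat (p choose k) * u ^ k * (- v) ^ (p - k))"
  have mid: "inN (of_nat p) S"
    unfolding S_def
  proof (rule inN_sum)
    fix k assume k: "k \<in> {1..<p}"
    then have "p dvd (p choose k)" using assms by (intro dvd_choose_prime) auto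
    then obtain q where q: "p choose k = p * q" by blast
    have "of_nat (p choose k) * u ^ k * (- v) ^ (p - k) = of_nat p * (of_nat q * u ^ k * (- v) ^ (p - k))"
      unfolding q of_nat_mult by (simp only: mult.assoc)
    then show "inN (of_nat p) (of_nat (p choose k) * u ^ k * (- v) ^ (p - k))"
      using inN_c by metis
  qed
  have "(u + - v) ^ p = u ^ p + (- v) ^ p + S"
    unfolding S_def by (rule binom_mid[OF p0])
  then have "(u - v) ^ p = u ^ p + (- v) ^ p + S" by (simp only: diff_conv_add_uminus)
  then have e: "(u - v) ^ p - (u ^ p - v ^ p) = S + ((- v) ^ p + v ^ p)"
    by (rule ab_aux2)
  have "inN (of_nat p) ((- v) ^ p + v ^ p)"
  proof (cases "p = 2")
    case True
    have a: "(- v) ^ 2 = v ^ 2" by (rule power2_minus)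
    have b: "(of_nat 2 :: 'r) * v^2 = v^2 + v^2" by (simp only: of_nat_numeral mult_2)
    have "(- v) ^ p + v ^ p = of_nat p * v ^ 2" by (simp only: True a b)
    then show ?thesis using inN_c by metis
  next
    case False
    then have "p > 2" using prime_ge_2_nat[OF assms] by linarith
    then have "odd p" by (rule prime_odd_nat[OF assms])
    then have "(- v) ^ p + v ^ p = 0" by (simp add: power_minus_odd)
    then show ?thesis by simp
  qed
  then have "inN (of_nat p) (S + ((- v) ^ p + v ^ p))" by (rule inN_add[OF mid])
  then show ?thesis unfolding e .
qed

lemma inN_pow_diff: "inN c (x - y) \<Longrightarrow> inN c (x ^ n - y ^ n)"
  by (simp add: power_diff_sumr2 inN_mult)

lemma frob_pow:
  fixes u v :: "'r::comm_ring_1"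
  assumes "prime p"
  shows "inN (of_nat p) ((u - v) ^ (p ^ a) - (u ^ (p ^ a) - v ^ (p ^ a)))"
proof (induct a)
  case 0 then show ?case by simp
next
  case (Suc a)
  let ?A = "(u - v) ^ (p ^ a)" and ?B = "u ^ (p ^ a) - v ^ (p ^ a)"
  have 1: "inN (of_nat p) (?A ^ p - ?B ^ p)" using Suc inN_pow_diff by blast
  have 2: "inN (of_nat p) (?B ^ p - ((u ^ (p ^ a)) ^ p - (v ^ (p ^ a)) ^ p))" using frob[OF assms] by blast
  have "?A ^ p - ?B ^ p + (?B ^ p - ((u ^ (p ^ a)) ^ p - (v ^ (p ^ a)) ^ p)) =
        (u - v) ^ (p ^ Suc a) - (u ^ (p ^ Suc a) - v ^ (p ^ Suc a))"
    by (simp add: power_mult[symmetric] mult.commute)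
  then show ?case using inN_add[OF 1 2] by simp
qed

lemma exists_big:
  assumes "(\<Sum>j<r. oo j - 1) < (\<Sum>j<r. b j :: nat)"
  shows "\<exists>j<r. oo j \<le> b j"
proof (rule ccontr)
  assume "\<not> ?thesis"
  then have "\<And>j. j < r \<Longrightarrow> b j \<le> oo j - 1" by force
  then have "(\<Sum>j<r. b j) \<le> (\<Sum>j<r. oo j - 1)" by (intro sum_mono) auto
  then show False using assms by simp
qed

lemma prod_upd:
  fixes y :: "nat \<Rightarrow> 'r::comm_ring_1"
  assumes "j < r"
  shows "(\<Prod>l<r. y l ^ (b(j := Suc (b j))) l) = y j * (\<Prod>l<r. y l ^ b l)"
proof -
  have f: "finite {..<r}" "j \<in> {..<r}" using assms by auto
  have c: "(\<Prod>l\<in>{..<r}-{j}. y l ^ (b(j := Suc (b j))) l) = (\<Prod>l\<in>{..<r}-{j}. y l ^ b l)"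
    by (rule prod.cong) auto
  have a: "(\<Prod>l<r. y l ^ (b(j := Suc (b j))) l) = y j ^ Suc (b j) * (\<Prod>l\<in>{..<r}-{j}. y l ^ b l)"
    using prod.remove[OF f, of "\<lambda>l. y l ^ (b(j := Suc (b j))) l"] c by simp
  have b: "(\<Prod>l<r. y l ^ b l) = y j ^ b j * (\<Prod>l\<in>{..<r}-{j}. y l ^ b l)"
    using prod.remove[OF f, of "\<lambda>l. y l ^ b l"] by simp
  show ?thesis using a b by (simp add: mult.assoc)
qed

lemma sum_upd:
  fixes b :: "nat \<Rightarrow> nat"
  assumes "j < r"
  shows "(\<Sum>l<r. (b(j := Suc (b j))) l) = Suc (\<Sum>l<r. b l :: nat)"
proof -
  have f: "finite {..<r}" "j \<in> {..<r}" using assms by auto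
  have c: "(\<Sum>l\<in>{..<r}-{j}. (b(j := Suc (b j))) l) = (\<Sum>l\<in>{..<r}-{j}. b l)"
    by (rule sum.cong) auto
  have a: "(\<Sum>l<r. (b(j := Suc (b j))) l) = Suc (b j) + (\<Sum>l\<in>{..<r}-{j}. b l)"
    using sum.remove[OF f, of "\<lambda>l. (b(j := Suc (b j))) l"] c by simp
  have b: "(\<Sum>l<r. b l) = b j + (\<Sum>l\<in>{..<r}-{j}. b l)"
    using sum.remove[OF f, of b] by simp
  show ?thesis using a b by simp
qed

lemma nil:
  fixes y :: "nat \<Rightarrow> 'r::comm_ring_1" and z :: "'i \<Rightarrow> 'r"
  assumes hy: "\<forall>j<r. inN c (y j ^ oo j)"
    and fin: "finite J" and hz: "\<forall>i\<in>J. \<exists>s. z i = (\<Sum>j<r. s j * y j)"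
  shows "\<forall>b. (\<Sum>j<r. oo j - 1) < (\<Sum>j<r. b j) + card J \<longrightarrow> inN c ((\<Prod>j<r. y j ^ b j) * prod z J)"
  using fin hz
proof (induct J rule: finite_induct)
  case empty
  show ?case
  proof (intro allI impI)
    fix b assume hb: "(\<Sum>j<r. oo j - 1) < (\<Sum>j<r. b j) + card {}"
    then obtain j where j: "j < r" "oo j \<le> b j" using exists_big[where r=r and oo=oo and b=b] by auto
    have f: "finite {..<r}" "j \<in> {..<r}" using j by auto
    have "(\<Prod>l<r. y l ^ b l) = y j ^ b j * (\<Prod>l\<in>{..<r}-{j}. y l ^ b l)"
      using prod.remove[OF f, of "\<lambda>l. y l ^ b l"] by simp
    also have "y j ^ b j = y j ^ oo j * y j ^ (b j - oo j)" using j by (simp add: power_add[symmetric])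
    finally have eq: "(\<Prod>l<r. y l ^ b l) = y j ^ oo j * (y j ^ (b j - oo j) * (\<Prod>l\<in>{..<r}-{j}. y l ^ b l))"
      by (simp add: mult.assoc)
    have "inN c (y j ^ oo j * (y j ^ (b j - oo j) * (\<Prod>l\<in>{..<r}-{j}. y l ^ b l)))"
      using hy j(1) inN_mult by blast
    then show "inN c ((\<Prod>j<r. y j ^ b j) * prod z {})" using eq by simp
  qed
next
  case (insert i J)
  show ?case
  proof (intro allI impI)
    fix b assume hb: "(\<Sum>j<r. oo j - 1) < (\<Sum>j<r. b j) + card (insert i J)"
    obtain s where s: "z i = (\<Sum>j<r. s j * y j)" using insert.prems by blast
    have IH: "\<forall>b. (\<Sum>j<r. oo j - 1) < (\<Sum>j<r. b j) + card J \<longrightarrow> inN c ((\<Prod>j<r. y j ^ b j) * prod z J)"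
      using insert by blast
    define Q where "Q = (\<Prod>l<r. y l ^ b l)"
    define R where "R = prod z J"
    have "(\<Prod>j<r. y j ^ b j) * prod z (insert i J) = Q * (z i * R)"
      using insert(1,2) by (simp add: Q_def R_def)
    also have "\<dots> = (\<Sum>j<r. s j * y j) * (Q * R)" unfolding s by (simp only: ac_simps)
    also have "\<dots> = (\<Sum>j<r. s j * y j * (Q * R))" by (rule sum_distrib_right)
    also have "\<dots> = (\<Sum>j<r. s j * (Q * y j * R))" by (rule sum.cong) (simp_all only: ac_simps)
    finally have "(\<Prod>j<r. y j ^ b j) * prod z (insert i J) = (\<Sum>j<r. s j * ((\<Prod>l<r. y l ^ b l) * y j * prod z J))"
      unfolding Q_def R_def .
    also have "\<dots> = (\<Sum>j<r. s j * ((\<Prod>l<r. y l ^ (b(j := Suc (b j))) l) * prod z J))"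
    proof (rule sum.cong[OF refl])
      fix j assume "j \<in> {..<r}"
      then have pu: "(\<Prod>l<r. y l ^ (b(j := Suc (b j))) l) = y j * (\<Prod>l<r. y l ^ b l)"
        by (intro prod_upd) simp
      show "s j * ((\<Prod>l<r. y l ^ b l) * y j * prod z J) = s j * ((\<Prod>l<r. y l ^ (b(j := Suc (b j))) l) * prod z J)"
        unfolding pu by (simp add: algebra_simps)
    qed
    finally have eq: "(\<Prod>j<r. y j ^ b j) * prod z (insert i J) = \<dots>" .
    have "inN c (\<Sum>j<r. s j * ((\<Prod>l<r. y l ^ (b(j := Suc (b j))) l) * prod z J))"
    proof (rule inN_sum)
      fix j assume "j \<in> {..<r}"
      then have "(\<Sum>j<r. oo j - 1) < (\<Sum>l<r. (b(j := Suc (b j))) l) + card J"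
        using hb insert(1,2) sum_upd[where j=j and r=r and b=b] by simp
      then show "inN c (s j * ((\<Prod>l<r. y l ^ (b(j := Suc (b j))) l) * prod z J))"
        using IH inN_mult2 by blast
    qed
    then show "inN c ((\<Prod>j<r. y j ^ b j) * prod z (insert i J))" using eq by simp
  qed
qed

lemma one_minus_prod:
  fixes u :: "nat \<Rightarrow> 'r::comm_ring_1"
  shows "\<exists>s. 1 - (\<Prod>j<r. u j ^ c j) = (\<Sum>j<r. s j * (1 - u j))"
proof (induct r)
  case 0 then show ?case by simp
next
  case (Suc r)
  then obtain s where s: "1 - (\<Prod>j<r. u j ^ c j) = (\<Sum>j<r. s j * (1 - u j))" by blast
  define P where "P = (\<Prod>j<r. u j ^ c j)"
  define t where "t = (\<Sum>i<c r. u r ^ i)"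
  have "1 - u r ^ c r = (1 - u r) * t" unfolding t_def by (rule one_diff_power_eq)
  define s' where "s' = s(r := P * t)"
  have "1 - (\<Prod>j<Suc r. u j ^ c j) = (1 - P) + P * (1 - u r ^ c r)"
    by (simp add: P_def algebra_simps)
  also have "\<dots> = (\<Sum>j<r. s j * (1 - u j)) + s' r * (1 - u r)"
  proof -
    have e1: "1 - P = (\<Sum>j<r. s j * (1 - u j))" using s by (simp add: P_def)
    have e2: "P * (1 - u r ^ c r) = s' r * (1 - u r)"
      using \<open>1 - u r ^ c r = (1 - u r) * t\<close> by (simp add: s'_def mult.assoc)
    show ?thesis by (simp only: e1 e2)
  qed
  also have "(\<Sum>j<r. s j * (1 - u j)) = (\<Sum>j<r. s' j * (1 - u j))"
    by (rule sum.cong) (simp_all add: s'_def)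
  finally show ?case by (intro exI[of _ s']) simp
qed

definition X :: "'a::comm_monoid_add \<Rightarrow> 'a \<Rightarrow>\<^sub>0 int" where "X g = Poly_Mapping.single g 1"

lemma X_0[simp]: "X 0 = 1" by (simp add: X_def)
lemma X_mult: "X g * X h = X (g + h)" by (simp add: X_def mult_single)
lemma X_pow: "X (g::'a::ab_group_add) ^ n = X (nsm n g)"
  by (induct n) (simp_all add: X_mult)
lemma X_sum: "X (sum f A) = (\<Prod>a\<in>A. X (f a))"
proof (induct A rule: infinite_finite_induct)
  case (insert x F)
  then show ?case using X_mult[of "f x" "sum f F"] by simp
qed simp_all

lemma lookup_sum': "Poly_Mapping.lookup (sum f A) k = (\<Sum>a\<in>A. Poly_Mapping.lookup (f a) k)"
  by (induct A rule: infinite_finite_induct) (simp_all add: lookup_add)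

lemma lookup_of_nat_mult: "Poly_Mapping.lookup (of_nat n * h) k = of_nat n * Poly_Mapping.lookup h k"
  by (induct n) (simp_all add: distrib_right lookup_add algebra_simps)

lemma prod_single: "finite I \<Longrightarrow> (\<Prod>i\<in>I. Poly_Mapping.single (x i) (-1::int)) = Poly_Mapping.single (sum x I) ((-1) ^ card I)"
  by (induct I rule: finite_induct) (simp_all add: mult_single)

lemma expand:
  assumes "finite J"
  shows "(\<Prod>i\<in>J. 1 - X (x i)) = (\<Sum>I\<in>Pow J. Poly_Mapping.single (sum x I) ((-1::int) ^ card I))"
proof -
  have "(\<Prod>i\<in>J. 1 - X (x i)) = (\<Prod>i\<in>J. Poly_Mapping.single (x i) (-1) + 1)"
    by (simp add: X_def single_uminus)
  also have "\<dots> = (\<Sum>I\<in>Pow J. (\<Prod>i\<in>I. Poly_Mapping.single (x i) (-1)) * prod (\<lambda>_. 1) (J - I))"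
    by (rule prod_add[OF assms])
  also have "\<dots> = (\<Sum>I\<in>Pow J. Poly_Mapping.single (sum x I) ((-1::int) ^ card I))"
    using assms by (intro sum.cong) (auto simp: prod_single finite_subset)
  finally show ?thesis .
qed

lemma olson:
  fixes e :: "nat \<Rightarrow> 'a::ab_group_add" and x :: "'i \<Rightarrow> 'a"
  assumes p: "prime p"
    and ee: "\<forall>j<r. nsm (p ^ (\<alpha> j)) (e j) = 0"
    and gen: "\<forall>g. \<exists>c. g = (\<Sum>j<r. nsm (c j) (e j))"
    and fin: "finite J" and big: "(\<Sum>j<r. p ^ (\<alpha> j) - 1) < card J"
  shows "int p dvd (\<Sum>I\<in>{I\<in>Pow J. sum x I = 0}. (-1) ^ card I)"
proof -
  define y where "y j = 1 - X (e j)" for j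
  have hy: "\<forall>j<r. inN (of_nat p) (y j ^ (p ^ (\<alpha> j)))"
  proof (intro allI impI)
    fix j assume "j < r"
    then have "inN (of_nat p) ((1 - X (e j)) ^ (p ^ \<alpha> j) - (1 ^ (p ^ \<alpha> j) - X (e j) ^ (p ^ \<alpha> j)))"
      using frob_pow[OF p] by blast
    moreover have "X (e j) ^ (p ^ \<alpha> j) = 1" using ee \<open>j < r\<close> by (simp add: X_pow)
    ultimately show "inN (of_nat p) (y j ^ (p ^ (\<alpha> j)))" by (simp add: y_def)
  qed
  have hz: "\<forall>i\<in>J. \<exists>s. 1 - X (x i) = (\<Sum>j<r. s j * y j)"
  proof
    fix i
    obtain c where c: "x i = (\<Sum>j<r. nsm (c j) (e j))" using gen by blast
    have "X (x i) = (\<Prod>j<r. X (e j) ^ c j)" by (simp add: c X_sum X_pow)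
    then show "\<exists>s. 1 - X (x i) = (\<Sum>j<r. s j * y j)"
      using one_minus_prod[where u="\<lambda>j. X (e j)" and r=r and c=c] by (simp add: y_def)
  qed
  have "inN (of_nat p) ((\<Prod>j<r. y j ^ (0::nat)) * (\<Prod>i\<in>J. 1 - X (x i)))"
    using spec[OF nil[OF hy fin hz], of "\<lambda>_. 0"] big by simp
  then obtain h where h: "(\<Prod>i\<in>J. 1 - X (x i)) = of_nat p * h" unfolding inN_def by auto
  have "Poly_Mapping.lookup (\<Prod>i\<in>J. 1 - X (x i)) 0 =
      Poly_Mapping.lookup (\<Sum>I\<in>Pow J. Poly_Mapping.single (sum x I) ((-1::int) ^ card I)) 0"
    by (simp only: expand[OF fin])
  also have "\<dots> = (\<Sum>I\<in>Pow J. Poly_Mapping.lookup (Poly_Mapping.single (sum x I) ((-1::int) ^ card I)) 0)"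
    by (rule lookup_sum')
  also have "\<dots> = (\<Sum>I\<in>Pow J. (if sum x I = 0 then (-1) ^ card I else 0))"
    by (rule sum.cong) (simp_all add: lookup_single when_def)
  also have "\<dots> = (\<Sum>I\<in>{I\<in>Pow J. sum x I = 0}. (-1) ^ card I)"
    by (rule sum.inter_filter[symmetric]) (simp add: fin)
  finally have eqL: "Poly_Mapping.lookup (\<Prod>i\<in>J. 1 - X (x i)) 0 = (\<Sum>I\<in>{I\<in>Pow J. sum x I = 0}. (-1) ^ card I)" .
  have "Poly_Mapping.lookup (\<Prod>i\<in>J. 1 - X (x i)) 0 = int p * Poly_Mapping.lookup h 0"
    using h by (simp add: lookup_of_nat_mult)
  then show ?thesis using eqL by (metis dvd_triv_left)
qed



lemma count_sets:
  assumes U: "finite U" and IU: "I \<subseteq> U" and s: "s \<le> card U"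
  shows "card {J. (J \<subseteq> U \<and> card J = s) \<and> I \<subseteq> J} = (card U - card I) choose (card U - s)"
proof (cases "card I \<le> s")
  case True
  have fI: "finite I" using U IU finite_subset by blast
  have cI: "card I \<le> card U" using card_mono[OF U IU] .
  have "bij_betw (\<lambda>J. J - I) {J. (J \<subseteq> U \<and> card J = s) \<and> I \<subseteq> J} {K. K \<subseteq> U - I \<and> card K = s - card I}"
  proof (rule bij_betw_byWitness[where f'="\<lambda>K. K \<union> I"])
    show "\<forall>J\<in>{J. (J \<subseteq> U \<and> card J = s) \<and> I \<subseteq> J}. (\<lambda>K. K \<union> I) (J - I) = J" by auto
    show "\<forall>K\<in>{K. K \<subseteq> U - I \<and> card K = s - card I}. (\<lambda>J. J - I) (K \<union> I) = K" by auto
    show "(\<lambda>J. J - I) ` {J. (J \<subseteq> U \<and> card J = s) \<and> I \<subseteq> J} \<subseteq> {K. K \<subseteq> U - I \<and> card K = s - card I}"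
      using fI by (auto simp: card_Diff_subset)
    show "(\<lambda>K. K \<union> I) ` {K. K \<subseteq> U - I \<and> card K = s - card I} \<subseteq> {J. (J \<subseteq> U \<and> card J = s) \<and> I \<subseteq> J}"
    proof
      fix J assume "J \<in> (\<lambda>K. K \<union> I) ` {K. K \<subseteq> U - I \<and> card K = s - card I}"
      then obtain K where K: "K \<subseteq> U - I" "card K = s - card I" "J = K \<union> I" by auto
      have fK: "finite K" using K(1) U finite_subset by blast
      have "K \<inter> I = {}" using K(1) by blast
      then have "card J = card K + card I" using K(3) fK fI by (simp add: card_Un_disjoint)
      then show "J \<in> {J. (J \<subseteq> U \<and> card J = s) \<and> I \<subseteq> J}" using K True IU by auto
    qed
  qed
  then have "card {J. (J \<subseteq> U \<and> card J = s) \<and> I \<subseteq> J} = card {K. K \<subseteq> U - I \<and> card K = s - card I}"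
    by (rule bij_betw_same_card)
  also have "\<dots> = card (U - I) choose (s - card I)" using U by (simp add: n_subsets)
  also have "card (U - I) = card U - card I" using fI IU by (simp add: card_Diff_subset)
  also have "(card U - card I) choose (s - card I) = (card U - card I) choose (card U - card I - (s - card I))"
    using s True by (intro binomial_symmetric) simp
  also have "card U - card I - (s - card I) = card U - s" using s True by simp
  finally show ?thesis .
next
  case False
  have "{J. (J \<subseteq> U \<and> card J = s) \<and> I \<subseteq> J} = {}"
  proof (rule ccontr)
    assume "{J. (J \<subseteq> U \<and> card J = s) \<and> I \<subseteq> J} \<noteq> {}"
    then obtain J where J: "J \<subseteq> U" "card J = s" "I \<subseteq> J" by auto
    have "finite J" using J(1) U finite_subset by blast
    then have "card I \<le> card J" using J(3) card_mono by blast
    then show False using J(2) False by simp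
  qed
  note e1 = this
  have "card I \<le> card U" using card_mono[OF U IU] .
  then have e2: "(card U - card I) choose (card U - s) = 0" using False s by (intro binomial_eq_0) simp
  show ?thesis by (simp only: e1 e2 card.empty)
qed

lemma double_count:
  fixes f :: "nat set \<Rightarrow> int"
  assumes U: "finite U" and s: "s \<le> card U"
  shows "(\<Sum>J\<in>{J. J \<subseteq> U \<and> card J = s}. \<Sum>I\<in>{I. I \<subseteq> J \<and> P I}. f I) =
         (\<Sum>I\<in>{I. I \<subseteq> U \<and> P I}. f I * int ((card U - card I) choose (card U - s)))"
proof -
  have f1: "finite {J. J \<subseteq> U \<and> card J = s}" by (rule finite_subset[of _ "Pow U"]) (auto simp: U)
  have f2: "finite {I. I \<subseteq> U \<and> P I}" by (rule finite_subset[of _ "Pow U"]) (auto simp: U)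
  have "(\<Sum>J\<in>{J. J \<subseteq> U \<and> card J = s}. \<Sum>I\<in>{I. I \<subseteq> J \<and> P I}. f I) =
        (\<Sum>J\<in>{J. J \<subseteq> U \<and> card J = s}. sum f {I \<in> {I. I \<subseteq> U \<and> P I}. I \<subseteq> J})"
  proof (rule sum.cong[OF refl])
    fix J assume "J \<in> {J. J \<subseteq> U \<and> card J = s}"
    then have "{I. I \<subseteq> J \<and> P I} = {I \<in> {I. I \<subseteq> U \<and> P I}. I \<subseteq> J}" by auto
    then show "(\<Sum>I\<in>{I. I \<subseteq> J \<and> P I}. f I) = sum f {I \<in> {I. I \<subseteq> U \<and> P I}. I \<subseteq> J}" by simp
  qed
  also have "\<dots> = (\<Sum>I\<in>{I. I \<subseteq> U \<and> P I}. \<Sum>J | J \<in> {J. J \<subseteq> U \<and> card J = s} \<and> I \<subseteq> J. f I)"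
    by (rule sum.swap_restrict[OF f1 f2])
  also have "\<dots> = (\<Sum>I\<in>{I. I \<subseteq> U \<and> P I}. f I * int ((card U - card I) choose (card U - s)))"
  proof (rule sum.cong[OF refl])
    fix I assume I: "I \<in> {I. I \<subseteq> U \<and> P I}"
    have "(\<Sum>J | J \<in> {J. J \<subseteq> U \<and> card J = s} \<and> I \<subseteq> J. f I) = of_nat (card {J. (J \<subseteq> U \<and> card J = s) \<and> I \<subseteq> J}) * f I"
      by simp
    also have "\<dots> = f I * int ((card U - card I) choose (card U - s))"
      using count_sets[OF U _ s, of I] I by simp
    finally show "(\<Sum>J | J \<in> {J. J \<subseteq> U \<and> card J = s} \<and> I \<subseteq> J. f I) = f I * int ((card U - card I) choose (card U - s))" .
  qed
  finally show ?thesis .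
qed

definition binspan :: "nat \<Rightarrow> (nat \<Rightarrow> int) \<Rightarrow> bool" where
  "binspan d P \<longleftrightarrow> (\<exists>\<mu>. \<forall>m. P m = (\<Sum>t\<le>d. \<mu> t * int (m choose t)))"

lemma binspan_add: "binspan d P \<Longrightarrow> binspan d Q \<Longrightarrow> binspan d (\<lambda>m. P m + Q m)"
  unfolding binspan_def
proof (elim exE)
  fix \<mu> \<nu> assume "\<forall>m. P m = (\<Sum>t\<le>d. \<mu> t * int (m choose t))" "\<forall>m. Q m = (\<Sum>t\<le>d. \<nu> t * int (m choose t))"
  then show "\<exists>\<mu>. \<forall>m. P m + Q m = (\<Sum>t\<le>d. \<mu> t * int (m choose t))"
    by (intro exI[of _ "\<lambda>t. \<mu> t + \<nu> t"]) (simp add: sum.distrib distrib_right)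
qed

lemma binspan_smult: "binspan d P \<Longrightarrow> binspan d (\<lambda>m. a * P m)"
  unfolding binspan_def
proof (elim exE)
  fix \<mu> assume "\<forall>m. P m = (\<Sum>t\<le>d. \<mu> t * int (m choose t))"
  then show "\<exists>\<mu>. \<forall>m. a * P m = (\<Sum>t\<le>d. \<mu> t * int (m choose t))"
    by (intro exI[of _ "\<lambda>t. a * \<mu> t"]) (simp add: sum_distrib_left mult.assoc)
qed

lemma binspan_mono: "d \<le> d' \<Longrightarrow> binspan d P \<Longrightarrow> binspan d' P"
  unfolding binspan_def
proof (elim exE)
  fix \<mu> assume d: "d \<le> d'" and h: "\<forall>m. P m = (\<Sum>t\<le>d. \<mu> t * int (m choose t))"
  show "\<exists>\<mu>. \<forall>m. P m = (\<Sum>t\<le>d'. \<mu> t * int (m choose t))"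
  proof (intro exI[of _ "\<lambda>t. if t \<le> d then \<mu> t else 0"] allI)
    fix m
    have "(\<Sum>t\<le>d'. (if t \<le> d then \<mu> t else 0) * int (m choose t)) = (\<Sum>t\<le>d. (if t \<le> d then \<mu> t else 0) * int (m choose t))"
      using d by (intro sum.mono_neutral_right) auto
    also have "\<dots> = (\<Sum>t\<le>d. \<mu> t * int (m choose t))" by (rule sum.cong) auto
    finally show "P m = (\<Sum>t\<le>d'. (if t \<le> d then \<mu> t else 0) * int (m choose t))" using h by simp
  qed
qed

lemma binspan_binom: "t \<le> d \<Longrightarrow> binspan d (\<lambda>m. int (m choose t))"
  unfolding binspan_def
proof (intro exI[of _ "\<lambda>s. if s = t then 1 else 0"] allI)
  fix m assume "t \<le> d"
  have "(\<Sum>s\<le>d. (if s = t then 1 else 0) * int (m choose s)) = (\<Sum>s\<le>d. if s = t then int (m choose s) else 0)"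
    by (rule sum.cong) auto
  also have "\<dots> = int (m choose t)" using \<open>t \<le> d\<close> by (simp add: sum.delta')
  finally show "int (m choose t) = (\<Sum>s\<le>d. (if s = t then 1 else 0) * int (m choose s))" by simp
qed

lemma binspan_sum: "finite A \<Longrightarrow> (\<forall>a\<in>A. binspan d (F a)) \<Longrightarrow> binspan d (\<lambda>m. \<Sum>a\<in>A. F a m)"
proof (induct A rule: finite_induct)
  case empty
  show ?case unfolding binspan_def by (intro exI[of _ "\<lambda>_. 0"]) simp
next
  case (insert x A)
  then have "binspan d (\<lambda>m. F x m + (\<Sum>a\<in>A. F a m))" by (intro binspan_add) auto
  then show ?case using insert by simp
qed

lemma key_identity_nat: "m * (m choose t) = Suc t * (m choose Suc t) + t * (m choose t)"
proof (cases "t < m")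
  case True
  have m1: "Suc (t + (m - t - 1)) = m" using True by simp
  have m2: "Suc (m - t - 1) = m - t" using True by simp
  have e: "Suc t * (m choose Suc t) = (m - t) * (m choose t)"
    using Suc_times_binomial_add[of t "m - t - 1"] unfolding m1 m2 .
  have "(m - t) * (m choose t) + t * (m choose t) = (m - t + t) * (m choose t)"
    by (simp only: add_mult_distrib)
  also have "m - t + t = m" using True by simp
  finally show ?thesis using e by simp
next
  case False
  have z: "m choose Suc t = 0" using False by (simp add: binomial_eq_0)
  have "m * (m choose t) = t * (m choose t)"
  proof (cases "t = m")
    case True then show ?thesis by simp
  next
    case False
    then have "m < t" using \<open>\<not> t < m\<close> by simp
    then have "m choose t = 0" by (simp add: binomial_eq_0)
    then show ?thesis by simp
  qed
  then show ?thesis by (simp add: z)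
qed

lemma key_identity: "(c - int m) * int (m choose t) = (c - int t) * int (m choose t) - int (Suc t) * int (m choose Suc t)"
proof -
  have h: "int m * int (m choose t) = int (Suc t) * int (m choose Suc t) + int t * int (m choose t)"
    using arg_cong[OF key_identity_nat[of m t], of int] by (simp only: of_nat_mult of_nat_add)
  have "(c - int m) * int (m choose t) = c * int (m choose t) - int m * int (m choose t)"
    by (simp add: left_diff_distrib)
  also have "\<dots> = c * int (m choose t) - (int (Suc t) * int (m choose Suc t) + int t * int (m choose t))"
    by (simp only: h)
  also have "\<dots> = (c - int t) * int (m choose t) - int (Suc t) * int (m choose Suc t)"
    by (simp add: algebra_simps)
  finally show ?thesis .
qed

lemma binspan_lin: "binspan d P \<Longrightarrow> binspan (Suc d) (\<lambda>m. (c - int m) * P m)"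
proof -
  assume "binspan d P"
  then obtain \<mu> where mu: "\<forall>m. P m = (\<Sum>t\<le>d. \<mu> t * int (m choose t))" unfolding binspan_def by blast
  define F where "F t m = \<mu> t * ((c - int t) * int (m choose t) + (- int (Suc t)) * int (m choose Suc t))" for t m
  have eq: "(\<lambda>m. (c - int m) * P m) = (\<lambda>m. \<Sum>t\<in>{..d}. F t m)"
  proof
    fix m
    have "(c - int m) * P m = (\<Sum>t\<le>d. \<mu> t * ((c - int m) * int (m choose t)))"
      using mu by (simp add: sum_distrib_left algebra_simps)
    also have "\<dots> = (\<Sum>t\<in>{..d}. F t m)"
    proof (rule sum.cong[OF refl])
      fix t assume "t \<in> {..d}"
      show "\<mu> t * ((c - int m) * int (m choose t)) = F t m"
        unfolding F_def key_identity by (simp add: algebra_simps)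
    qed
    finally show "(c - int m) * P m = (\<Sum>t\<in>{..d}. F t m)" .
  qed
  have "\<forall>t\<in>{..d}. binspan (Suc d) (F t)"
  proof
    fix t assume "t \<in> {..d}"
    then have "binspan (Suc d) (\<lambda>m. (c - int t) * int (m choose t) + (- int (Suc t)) * int (m choose Suc t))"
      by (intro binspan_add binspan_smult binspan_binom) auto
    then show "binspan (Suc d) (F t)"
      unfolding F_def by (rule binspan_smult)
  qed
  then have "binspan (Suc d) (\<lambda>m. \<Sum>t\<in>{..d}. F t m)" by (intro binspan_sum) auto
  then show ?thesis using eq by simp
qed

lemma binspan_prod: "finite L \<Longrightarrow> binspan (card L) (\<lambda>m. \<Prod>l\<in>L. (c l - int m))"
proof (induct L rule: finite_induct)
  case empty
  show ?case unfolding binspan_def by (intro exI[of _ "\<lambda>_. 1"]) simp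
next
  case (insert x L)
  then have "binspan (Suc (card L)) (\<lambda>m. (c x - int m) * (\<Prod>l\<in>L. (c l - int m)))"
    by (intro binspan_lin) auto
  then show ?case using insert by simp
qed

lemma main_comb:
  fixes Z :: "'b set" and W :: "'b \<Rightarrow> int" and K :: "'b \<Rightarrow> nat"
  assumes fin: "finite Z" and hyp: "\<forall>t\<le>d. int p dvd (\<Sum>I\<in>Z. W I * int ((K I) choose t))"
    and P: "binspan d P"
  shows "int p dvd (\<Sum>I\<in>Z. W I * P (K I))"
proof -
  obtain \<mu> where mu: "\<forall>m. P m = (\<Sum>t\<le>d. \<mu> t * int (m choose t))" using P unfolding binspan_def by blast
  have "(\<Sum>I\<in>Z. W I * P (K I)) = (\<Sum>I\<in>Z. W I * (\<Sum>t\<le>d. \<mu> t * int ((K I) choose t)))"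
    using mu by simp
  also have "\<dots> = (\<Sum>I\<in>Z. \<Sum>t\<le>d. \<mu> t * (W I * int ((K I) choose t)))"
    by (rule sum.cong[OF refl]) (simp add: sum_distrib_left ac_simps)
  also have "\<dots> = (\<Sum>t\<le>d. \<Sum>I\<in>Z. \<mu> t * (W I * int ((K I) choose t)))"
    by (rule sum.swap)
  also have "\<dots> = (\<Sum>t\<le>d. \<mu> t * (\<Sum>I\<in>Z. W I * int ((K I) choose t)))"
    by (simp add: sum_distrib_left)
  finally have eq: "(\<Sum>I\<in>Z. W I * P (K I)) = (\<Sum>t\<le>d. \<mu> t * (\<Sum>I\<in>Z. W I * int ((K I) choose t)))" .
  have "int p dvd (\<Sum>t\<le>d. \<mu> t * (\<Sum>I\<in>Z. W I * int ((K I) choose t)))"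
  proof (rule dvd_sum)
    fix t assume "t \<in> {..d}"
    then have "int p dvd (\<Sum>I\<in>Z. W I * int ((K I) choose t))" using hyp by simp
    then show "int p dvd \<mu> t * (\<Sum>I\<in>Z. W I * int ((K I) choose t))" by (rule dvd_mult)
  qed
  then show ?thesis using eq by simp
qed



lemma sum_mset_replicate_nsm: "sum_mset (replicate_mset n x) = nsm n (x::'a::ab_group_add)"
  by (induct n) simp_all

lemma sum_upd_lt2: "(\<Sum>j<(r::nat). f j ((c(r := a)) j)) = (\<Sum>j<r. f j (c j))"
  by (rule sum.cong) auto

lemma T0_decomp:
  fixes e :: "nat \<Rightarrow> 'a::ab_group_add"
  shows "\<forall>U. U \<subseteq># (\<Sum>j<r. replicate_mset (m j) (e j)) \<longrightarrow>
    (\<exists>c. (\<forall>j<r. c j \<le> m j) \<and> sum_mset U = (\<Sum>j<r. nsm (c j) (e j)) \<and> size U = (\<Sum>j<r. c j))"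
proof (induct r)
  case 0
  show ?case by simp
next
  case (Suc r)
  show ?case
  proof (intro allI impI)
    fix U
    define A where "A = (\<Sum>j<r. replicate_mset (m j) (e j))"
    define R where "R = replicate_mset (m r) (e r)"
    assume "U \<subseteq># (\<Sum>j<Suc r. replicate_mset (m j) (e j))"
    then have UAR: "U \<subseteq># A + R" by (simp add: A_def R_def)
    define U1 where "U1 = U \<inter># A"
    define U2 where "U2 = U - U1"
    have U1A: "U1 \<subseteq># A" unfolding U1_def by simp
    have U2R: "U2 \<subseteq># R"
      unfolding subseteq_mset_def
    proof
      fix a
      have "count U a \<le> count A a + count R a" using UAR unfolding subseteq_mset_def by simp
      then show "count U2 a \<le> count R a" unfolding U2_def U1_def by simp
    qed
    have U1U: "U1 \<subseteq># U" unfolding U1_def by simp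
    have UU: "U = U1 + U2" unfolding U2_def using subset_mset.add_diff_inverse[OF U1U] by simp
    obtain c2 where c2: "c2 \<le> m r" "U2 = replicate_mset c2 (e r)"
      using U2R unfolding R_def by (rule msubseteq_replicate_msetE)
    obtain c where c: "\<forall>j<r. c j \<le> m j" "sum_mset U1 = (\<Sum>j<r. nsm (c j) (e j))" "size U1 = (\<Sum>j<r. c j)"
      using Suc U1A unfolding A_def by blast
    define c' where "c' = c(r := c2)"
    have "\<forall>j<Suc r. c' j \<le> m j" using c(1) c2(1) by (simp add: c'_def less_Suc_eq)
    moreover have "sum_mset U = (\<Sum>j<Suc r. nsm (c' j) (e j))"
      using sum_upd_lt2[where f="\<lambda>j x. nsm x (e j)" and r=r and c=c and a=c2] c c2
      by (simp add: UU c'_def sum_mset_replicate_nsm)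
    moreover have "size U = (\<Sum>j<Suc r. c' j)"
      using sum_upd_lt2[where f="\<lambda>j x. x" and r=r and c=c and a=c2] c c2
      by (simp add: UU c'_def)
    ultimately show "\<exists>c. (\<forall>j<Suc r. c j \<le> m j) \<and> sum_mset U = (\<Sum>j<Suc r. nsm (c j) (e j)) \<and> size U = (\<Sum>j<Suc r. c j)"
      by blast
  qed
qed

lemma mset_nth_image: "mset xs = image_mset (nth xs) (mset_set {..<length xs})"
proof -
  have "mset xs = mset (map (nth xs) [0..<length xs])" by (simp add: map_nth)
  also have "\<dots> = image_mset (nth xs) (mset [0..<length xs])" by simp
  also have "mset [0..<length xs] = mset_set {..<length xs}" by (simp add: mset_set_upto_eq_mset_upto)
  finally show ?thesis .
qed

lemma TI_props:
  assumes "I \<subseteq> {..<length xs}"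
  shows "image_mset (nth xs) (mset_set I) \<subseteq># mset xs"
    and "size (image_mset (nth xs) (mset_set I)) = card I"
    and "sum_mset (image_mset (nth xs) (mset_set I)) = sum (nth xs) I"
    and "I \<noteq> {} \<Longrightarrow> image_mset (nth xs) (mset_set I) \<noteq> {#}"
proof -
  have fI: "finite I" using assms finite_subset by blast
  show "image_mset (nth xs) (mset_set I) \<subseteq># mset xs"
    by (subst mset_nth_image) (intro image_mset_subseteq_mono subset_imp_msubset_mset_set assms; simp)
  show s: "size (image_mset (nth xs) (mset_set I)) = card I" by simp
  show "sum_mset (image_mset (nth xs) (mset_set I)) = sum (nth xs) I" by (simp add: sum_unfold_sum_mset)
  assume "I \<noteq> {}"
  then have "card I \<noteq> 0" using fI by simp
  then show "image_mset (nth xs) (mset_set I) \<noteq> {#}" using s by (metis size_empty)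
qed

lemma davenport_val:
  assumes p: "prime p" and B: "basis p (UNIV::'a::{finite,ab_group_add} set) r e \<alpha>"
  shows "davenport TYPE('a) = Suc (\<Sum>j<r. p ^ \<alpha> j - 1)"
proof -
  define s0 where "s0 = (\<Sum>j<r. p ^ \<alpha> j - 1)"
  have ee: "\<forall>j<r. nsm (p ^ (\<alpha> j)) (e j) = 0" using B unfolding basis_def by blast
  have gen: "\<forall>g. \<exists>c. g = (\<Sum>j<r. nsm (c j) (e j))" using B unfolding basis_def by blast
  have ind: "\<forall>c. (\<forall>j<r. c j < p^(\<alpha> j)) \<and> (\<Sum>j<r. nsm (c j) (e j)) = 0 \<longrightarrow> (\<forall>j<r. c j = 0)"
    using B unfolding basis_def by blast
  define Pr where "Pr t \<longleftrightarrow> 0 < t \<and> (\<forall>S::'a multiset. t \<le> size S \<longrightarrow> (\<exists>T. T \<subseteq># S \<and> T \<noteq> {#} \<and> zero_sum T))" for t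
  have D: "davenport TYPE('a) = (LEAST t. Pr t)" unfolding davenport_def Pr_def by simp
  have P1: "Pr (Suc s0)"
    unfolding Pr_def
  proof (intro conjI allI impI)
    fix S :: "'a multiset" assume hS: "Suc s0 \<le> size S"
    show "\<exists>T. T \<subseteq># S \<and> T \<noteq> {#} \<and> zero_sum T"
    proof (rule ccontr)
      assume nT: "\<not> (\<exists>T. T \<subseteq># S \<and> T \<noteq> {#} \<and> zero_sum T)"
      obtain xs where xs: "mset xs = S" using ex_mset by blast
      define n where "n = length xs"
      have Z: "{I \<in> Pow {..<n}. sum (nth xs) I = 0} = {{}}"
      proof (intro equalityI subsetI)
        fix I assume "I \<in> {I \<in> Pow {..<n}. sum (nth xs) I = 0}"
        then have I: "I \<subseteq> {..<n}" "sum (nth xs) I = 0" by auto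
        show "I \<in> {{}}"
        proof (rule ccontr)
          assume "I \<notin> {{}}"
          then have "I \<noteq> {}" by simp
          then have "image_mset (nth xs) (mset_set I) \<subseteq># S \<and> image_mset (nth xs) (mset_set I) \<noteq> {#}
             \<and> zero_sum (image_mset (nth xs) (mset_set I))"
            using TI_props[of I xs] I xs unfolding n_def zero_sum_def by simp
          then show False using nT by blast
        qed
      next
        fix I :: "nat set" assume "I \<in> {{}}"
        then show "I \<in> {I \<in> Pow {..<n}. sum (nth xs) I = 0}" by simp
      qed
      have "s0 < card {..<n}" using hS xs unfolding n_def by auto
      then have "int p dvd (\<Sum>I\<in>{I\<in>Pow {..<n}. sum (nth xs) I = 0}. (-1) ^ card I)"
        using olson[OF p ee gen, of "{..<n}" "nth xs"] unfolding s0_def by simp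
      then have "int p dvd 1" unfolding Z by simp
      then show False using p by (simp add: prime_gt_1_nat)
    qed
  qed simp
  have P2: "Suc s0 \<le> t" if "Pr t" for t
  proof (rule ccontr)
    assume "\<not> Suc s0 \<le> t"
    then have ts: "t \<le> s0" by simp
    define T0 where "T0 = (\<Sum>j<r. replicate_mset (p ^ \<alpha> j - 1) (e j))"
    have "size T0 = s0" unfolding T0_def s0_def by (induct r) simp_all
    then have "t \<le> size T0" using ts by simp
    moreover have "\<forall>S::'a multiset. t \<le> size S \<longrightarrow> (\<exists>T. T \<subseteq># S \<and> T \<noteq> {#} \<and> zero_sum T)"
      using that unfolding Pr_def by blast
    ultimately obtain T where T: "T \<subseteq># T0" "T \<noteq> {#}" "zero_sum T" by blast
    obtain c where c: "\<forall>j<r. c j \<le> p ^ \<alpha> j - 1" "sum_mset T = (\<Sum>j<r. nsm (c j) (e j))" "size T = (\<Sum>j<r. c j)"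
      using T0_decomp[where r=r and m="\<lambda>j. p ^ \<alpha> j - 1" and e=e] T(1) unfolding T0_def by blast
    have "\<forall>j<r. c j < p ^ \<alpha> j"
    proof (intro allI impI)
      fix j assume "j < r"
      have "p ^ \<alpha> j > 0" using p prime_gt_0_nat by simp
      moreover have "c j \<le> p ^ \<alpha> j - 1" using c(1) \<open>j < r\<close> by blast
      ultimately show "c j < p ^ \<alpha> j" by linarith
    qed
    moreover have "(\<Sum>j<r. nsm (c j) (e j)) = 0" using c(2) T(3) unfolding zero_sum_def by simp
    ultimately have "\<forall>j<r. c j = 0" using ind by blast
    then have "size T = 0" using c(3) by simp
    then show False using T(2) by simp
  qed
  have "(LEAST t. Pr t) = Suc s0" by (rule Least_equality) (use P1 P2 in auto)
  then show ?thesis using D unfolding s0_def by simp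
qed


theorem corollary2p4:
  fixes p i :: nat and S :: "'a::{finite,ab_group_add} multiset"
  assumes "prime p"
    and "\<exists>k. card (UNIV :: 'a set) = p ^ k"
    and "i \<ge> 1"
    and "size S = davenport TYPE('a) + i - 1"
  shows "(i \<ge> 2 \<and> (\<exists>S'. S' \<subseteq># S \<and> zero_sum S' \<and> \<not> p dvd size S') \<longrightarrow> dispersive S)
       \<and> ((\<not> (\<exists>S'. S' \<subseteq># S \<and> S' \<noteq> {#} \<and> zero_sum S' \<and> p dvd size S')) \<longrightarrow>
           i \<le> p - 1 \<and>
           i \<le> card {size T | T. T \<subseteq># S \<and> T \<noteq> {#} \<and> zero_sum T})"
proof -
  have p: "prime p" by (rule assms(1))
  obtain k where k: "card (UNIV :: 'a set) = p ^ k" using assms(2) by blast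
  have expo: "nsm (p^k) x = 0" for x :: 'a using nsm_card_univ[of x] k by simp
  interpret pgrp p k "TYPE('a)" by unfold_locales (use p expo in auto)
  have "sg (UNIV::'a set)" by (simp add: sg_def)
  then obtain r e \<alpha> where B: "basis p (UNIV::'a set) r e \<alpha>" using basis_exists by blast
  define s0 where "s0 = (\<Sum>j<r. p ^ \<alpha> j - 1)"
  have ee: "\<forall>j<r. nsm (p ^ (\<alpha> j)) (e j) = 0" using B unfolding basis_def by blast
  have gen: "\<forall>g. \<exists>c. g = (\<Sum>j<r. nsm (c j) (e j))" using B unfolding basis_def by blast
  have D: "davenport TYPE('a) = Suc s0" unfolding s0_def by (rule davenport_val[OF p B])
  obtain xs where xs: "mset xs = S" using ex_mset by blast
  define n where "n = length xs"
  have "n = size S" using xs unfolding n_def by auto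
  then have n: "n = s0 + i" using assms(3,4) D by simp
  define x where "x = nth xs"
  define Z where "Z = {I. I \<subseteq> {..<n} \<and> sum x I = 0}"
  define W where "W I = (-1::int) ^ card I" for I :: "nat set"
  have finZ: "finite Z" unfolding Z_def by (rule finite_subset[of _ "Pow {..<n}"]) auto
  have eZ: "{} \<in> Z" unfolding Z_def by simp
  have TI: "image_mset x (mset_set I) \<subseteq># S \<and> image_mset x (mset_set I) \<noteq> {#} \<and> zero_sum (image_mset x (mset_set I))
     \<and> size (image_mset x (mset_set I)) = card I" if "I \<in> Z" "I \<noteq> {}" for I
    using TI_props[of I xs] that xs unfolding Z_def x_def n_def zero_sum_def by simp
  have cardZ: "card I \<le> n" if "I \<in> Z" for I
    using that card_mono[of "{..<n}" I] unfolding Z_def by simp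
  have hypD: "\<forall>t\<le>i - 1. int p dvd (\<Sum>I\<in>Z. W I * int ((n - card I) choose t))"
  proof (intro allI impI)
    fix t assume t: "t \<le> i - 1"
    define s where "s = n - t"
    have sn: "s \<le> card {..<n}" unfolding s_def by simp
    have "(\<Sum>J\<in>{J. J \<subseteq> {..<n} \<and> card J = s}. \<Sum>I\<in>{I. I \<subseteq> J \<and> sum x I = 0}. W I) =
         (\<Sum>I\<in>{I. I \<subseteq> {..<n} \<and> sum x I = 0}. W I * int ((card {..<n} - card I) choose (card {..<n} - s)))"
      by (rule double_count[OF _ sn]) simp
    also have "\<dots> = (\<Sum>I\<in>Z. W I * int ((n - card I) choose t))"
      unfolding Z_def s_def using t n by simp
    finally have eq: "(\<Sum>J\<in>{J. J \<subseteq> {..<n} \<and> card J = s}. \<Sum>I\<in>{I. I \<subseteq> J \<and> sum x I = 0}. W I) =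
        (\<Sum>I\<in>Z. W I * int ((n - card I) choose t))" .
    have "int p dvd (\<Sum>J\<in>{J. J \<subseteq> {..<n} \<and> card J = s}. \<Sum>I\<in>{I. I \<subseteq> J \<and> sum x I = 0}. W I)"
    proof (rule dvd_sum)
      fix J assume J: "J \<in> {J. J \<subseteq> {..<n} \<and> card J = s}"
      then have fJ: "finite J" using finite_subset by blast
      have "s0 < card J" using J t n assms(3) unfolding s_def by auto
      then have "int p dvd (\<Sum>I\<in>{I\<in>Pow J. sum x I = 0}. (-1) ^ card I)"
        using olson[OF p ee gen fJ, of x] unfolding s0_def by simp
      moreover have "{I\<in>Pow J. sum x I = 0} = {I. I \<subseteq> J \<and> sum x I = 0}" by auto
      ultimately show "int p dvd (\<Sum>I\<in>{I. I \<subseteq> J \<and> sum x I = 0}. W I)" unfolding W_def by simp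
    qed
    then show "int p dvd (\<Sum>I\<in>Z. W I * int ((n - card I) choose t))" using eq by simp
  qed
  have main: "int p dvd (\<Sum>I\<in>Z. W I * (\<Prod>l\<in>L. (int (card I) - l)))"
    if fL: "finite L" and cL: "card L \<le> i - 1" for L :: "int set"
  proof -
    have "binspan (card L) (\<lambda>m. \<Prod>l\<in>L. ((int n - l) - int m))" by (rule binspan_prod[OF fL])
    then have "binspan (i - 1) (\<lambda>m. \<Prod>l\<in>L. ((int n - l) - int m))" using cL binspan_mono by blast
    then have "int p dvd (\<Sum>I\<in>Z. W I * (\<Prod>l\<in>L. ((int n - l) - int (n - card I))))"
      by (rule main_comb[OF finZ hypD])
    moreover have "(\<Sum>I\<in>Z. W I * (\<Prod>l\<in>L. ((int n - l) - int (n - card I)))) =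
        (\<Sum>I\<in>Z. W I * (\<Prod>l\<in>L. (int (card I) - l)))"
    proof (rule sum.cong[OF refl])
      fix I assume "I \<in> Z"
      then have "card I \<le> n" by (rule cardZ)
      then show "W I * (\<Prod>l\<in>L. ((int n - l) - int (n - card I))) = W I * (\<Prod>l\<in>L. (int (card I) - l))"
        by (simp add: of_nat_diff)
    qed
    ultimately show ?thesis by simp
  qed
  have split: "(\<Sum>I\<in>Z. F I) = F {} + (\<Sum>I\<in>Z - {{}}. F I)" for F :: "nat set \<Rightarrow> int"
    using sum.remove[OF finZ eZ] by simp
  have W0: "W {} = 1" unfolding W_def by simp
  have pint: "prime (int p)" using p by simp
  have part1: "i \<ge> 2 \<and> (\<exists>S'. S' \<subseteq># S \<and> zero_sum S' \<and> \<not> p dvd size S') \<longrightarrow> dispersive S"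
  proof (intro impI)
    assume h: "i \<ge> 2 \<and> (\<exists>S'. S' \<subseteq># S \<and> zero_sum S' \<and> \<not> p dvd size S')"
    then obtain S' where S': "S' \<subseteq># S" "zero_sum S'" "\<not> p dvd size S'" by blast
    show "dispersive S"
    proof (rule ccontr)
      assume nd: "\<not> dispersive S"
      have S'ne: "S' \<noteq> {#}" using S'(3) by auto
      have cI: "card I = size S'" if I: "I \<in> Z - {{}}" for I
      proof -
        have IZ: "I \<in> Z" "I \<noteq> {}" using I by auto
        obtain T where T: "T \<subseteq># S" "T \<noteq> {#}" "zero_sum T" "size T = card I"
          using TI[OF IZ] by blast
        show "card I = size S'"
        proof (rule ccontr)
          assume "card I \<noteq> size S'"
          then have "dispersive S" unfolding dispersive_def using T S' S'ne
            by (intro exI[of _ T] exI[of _ S']) simp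
          then show False using nd by simp
        qed
      qed
      have "int p dvd (\<Sum>I\<in>Z. W I * (\<Prod>l\<in>{int (size S')}. (int (card I) - l)))"
      proof -
        have "2 \<le> i" using h by blast
        then have "card {int (size S')} \<le> i - 1" by simp
        then show ?thesis using main[of "{int (size S')}"] by simp
      qed
      also have "(\<Sum>I\<in>Z. W I * (\<Prod>l\<in>{int (size S')}. (int (card I) - l))) = - int (size S')"
      proof -
        have "(\<Sum>I\<in>Z - {{}}. W I * (\<Prod>l\<in>{int (size S')}. (int (card I) - l))) = 0"
          using cI by (intro sum.neutral) simp
        then show ?thesis using split W0 by simp
      qed
      finally have "int p dvd int (size S')" by simp
      then show False using S'(3) by simp
    qed
  qed
  have part2: "i \<le> p - 1 \<and> i \<le> card {size T | T. T \<subseteq># S \<and> T \<noteq> {#} \<and> zero_sum T}"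
    if H2: "\<not> (\<exists>S'. S' \<subseteq># S \<and> S' \<noteq> {#} \<and> zero_sum S' \<and> p dvd size S')"
  proof
    have ndvd: "\<not> p dvd card I" if "I \<in> Z - {{}}" for I
      using TI[of I] that H2 by auto
    show "i \<le> p - 1"
    proof (rule ccontr)
      assume "\<not> i \<le> p - 1"
      then have ip: "p - 1 \<le> i - 1" by simp
      define L where "L = {1..<int p}"
      have fL: "finite L" unfolding L_def by simp
      have cL: "card L = p - 1" unfolding L_def by simp
      have "int p dvd (\<Sum>I\<in>Z. W I * (\<Prod>l\<in>L. (int (card I) - l)))" using main[OF fL] cL ip by simp
      moreover have "int p dvd (\<Sum>I\<in>Z - {{}}. W I * (\<Prod>l\<in>L. (int (card I) - l)))"
      proof (rule dvd_sum)
        fix I assume I: "I \<in> Z - {{}}"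
        define l0 where "l0 = int (card I mod p)"
        have "card I mod p \<noteq> 0" using ndvd[OF I] by (simp add: dvd_eq_mod_eq_0)
        moreover have "card I mod p < p" using p prime_gt_0_nat by simp
        ultimately have l0L: "l0 \<in> L" unfolding L_def l0_def by auto
        have e: "p * (card I div p) + card I mod p = card I" by simp
        have "int (card I) = int p * int (card I div p) + int (card I mod p)"
          by (metis e of_nat_add of_nat_mult)
        then have "int (card I) - l0 = int p * int (card I div p)" unfolding l0_def by linarith
        then have "int p dvd (int (card I) - l0)" by simp
        also have "(int (card I) - l0) dvd (\<Prod>l\<in>L. (int (card I) - l))" by (rule dvd_prodI[OF fL l0L])
        finally show "int p dvd W I * (\<Prod>l\<in>L. (int (card I) - l))" by simp
      qed
      ultimately have "int p dvd (\<Prod>l\<in>L. (int (card {}) - l))" using split W0 by (simp add: dvd_add_left_iff)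
      then obtain l where l: "l \<in> L" "int p dvd (0 - l)" using prime_dvd_prod_iff[OF fL pint] by auto
      then have "int p dvd l" by simp
      moreover have "0 < l" "l < int p" using l(1) unfolding L_def by auto
      ultimately have "int p \<le> l" using zdvd_imp_le by blast
      then show False using \<open>l < int p\<close> by simp
    qed
    define Ls where "Ls = {size T | T. T \<subseteq># S \<and> T \<noteq> {#} \<and> zero_sum T}"
    have fLs: "finite Ls"
      by (rule finite_subset[of _ "{..size S}"]) (auto simp: Ls_def intro: size_mset_mono)
    show "i \<le> card {size T | T. T \<subseteq># S \<and> T \<noteq> {#} \<and> zero_sum T}"
      unfolding Ls_def[symmetric]
    proof (rule ccontr)
      assume "\<not> i \<le> card Ls"
      define L where "L = int ` Ls"
      have fL: "finite L" unfolding L_def using fLs by simp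
      have cL: "card L \<le> i - 1" unfolding L_def using \<open>\<not> i \<le> card Ls\<close> by (simp add: card_image)
      have "int p dvd (\<Sum>I\<in>Z. W I * (\<Prod>l\<in>L. (int (card I) - l)))" using main[OF fL cL] .
      moreover have "(\<Sum>I\<in>Z - {{}}. W I * (\<Prod>l\<in>L. (int (card I) - l))) = 0"
      proof (rule sum.neutral, rule ballI)
        fix I assume I: "I \<in> Z - {{}}"
        then have IZ: "I \<in> Z" "I \<noteq> {}" by auto
        have h: "image_mset x (mset_set I) \<subseteq># S \<and> image_mset x (mset_set I) \<noteq> {#} \<and> zero_sum (image_mset x (mset_set I))
          \<and> size (image_mset x (mset_set I)) = card I" by (rule TI[OF IZ])
        then have "card I \<in> Ls" unfolding Ls_def by (auto intro!: exI[of _ "image_mset x (mset_set I)"])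
        then have "int (card I) \<in> L" unfolding L_def by simp
        then have "\<exists>a\<in>L. int (card I) - a = 0" by auto
        then have "(\<Prod>l\<in>L. (int (card I) - l)) = 0" using prod_zero_iff[OF fL, of "\<lambda>l. int (card I) - l"] by blast
        then show "W I * (\<Prod>l\<in>L. (int (card I) - l)) = 0" by simp
      qed
      ultimately have "int p dvd (\<Prod>l\<in>L. (int (card {}) - l))" using split W0 by simp
      then obtain l where l: "l \<in> L" "int p dvd (0 - l)" using prime_dvd_prod_iff[OF fL pint] by auto
      then obtain T where T: "T \<subseteq># S" "T \<noteq> {#}" "zero_sum T" "l = int (size T)" unfolding L_def Ls_def by auto
      have "p dvd size T" using l(2) T(4) by simp
      then show False using H2 T by blast
    qed
  qed
  show ?thesis using part1 part2 by blast
qed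

end
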